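(* For any skew-symmetric matrix $M$ with label set $\mathsf{N}$, the tensors $\sum_{I\subseteq\mathsf{N}}\operatorname{Pf}(M_I)\langle I|$ and $\sum_{I\subseteq\mathsf{N}}\operatorname{Pf}(M_{\bar I})|I\rangle$ are morphisms of $\mathscr{P}$. Consequently $\mathscr{P}$ is a dagger monoidal category (with the usual dagger of linear maps).
   Context: For $i\in\mathbb{N}$ let $V_i\cong\mathbb{C}^2$ with orthonormal basis $v_{i,0},v_{i,1}$, and for a finite ordered $\mathsf{N}\subset\mathbb{N}$ let $V_\mathsf{N}=\bigotimes_{i\in\mathsf{N}}V_i$. For $I\subseteq\mathsf{N}$, $|I\rangle=\bigotimes_{i\in\mathsf{N}}v_{i,\chi(i,I)}$ and $\langle I|=\bigotimes_{i\in\mathsf{N}}v^*_{i,\chi(i,I)}$, $\chi$ the indicator of $I$. For a skew-symmetric matrix $M$ with rows and columns labeled by $\mathsf{N}$ (same order), $M_I$ is the principal submatrix on labels $I$ and $M_{\bar I}$ the principal submatrix with labels $I$ deleted; $\operatorname{sPf}(M)=\sum_{I\subseteq\mathsf{N}}\operatorname{Pf}(M_I)|I\rangle$ and $\operatorname{sPf}^\vee(M)=\sum_{I\subseteq\mathsf{N}}\operatorname{Pf}(M_{\bar I})\langle I|$ (Pfaffian of the empty matrix $1$, of odd-size matrices $0$). $\mathscr{P}$ is the monoidal subcategory of $\mathrm{Vect}_\mathbb{C}$ with objects the $V_\mathsf{N}$ and morphisms generated under composition (tensor contraction) and tensor product by all $\operatorname{sPf}(M)$ and $\operatorname{sPf}^\vee(M)$.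 *)

theory Defs
  imports Complex_Main
begin

text \<open>Tensors between tensor powers of C^2. The object V_N (N a finite ordered label set
  with |N| = n) is represented positionally by n; the basis vector |I> of V_N, I a subset of N,
  is represented by the set of positions of I, a subset of {..<n}. A morphism V_n -> V_m is
  a record with domain n, codomain m and coefficients coef J I = <J| f |I>
  (J subset of {..<m}, I subset of {..<n}; coefficients vanish outside these).\<close>

record mor =
  dom :: nat
  cod :: nat
  coef :: "nat set \<Rightarrow> nat set \<Rightarrow> complex"

function pf :: "(nat \<Rightarrow> nat \<Rightarrow> 'a::comm_ring_1) \<Rightarrow> nat list \<Rightarrow> 'a" where
  "pf A [] = 1"
| "pf A (x # xs) =
     (\<Sum>j<length xs. (-1) ^ j * A x (xs ! j) * pf A (take j xs @ drop (Suc j) xs))"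
  by pat_completeness auto
termination
  by (relation "measure (\<lambda>(A, xs). length xs)") auto

definition Pf_sub :: "(nat \<Rightarrow> nat \<Rightarrow> complex) \<Rightarrow> nat set \<Rightarrow> complex" where
  "Pf_sub M I = pf M (sorted_list_of_set I)"

definition skew :: "nat \<Rightarrow> (nat \<Rightarrow> nat \<Rightarrow> complex) \<Rightarrow> bool" where
  "skew n M \<longleftrightarrow> (\<forall>i<n. \<forall>j<n. M i j = - M j i)"

definition sPf :: "nat \<Rightarrow> (nat \<Rightarrow> nat \<Rightarrow> complex) \<Rightarrow> mor" where
  "sPf n M = \<lparr>dom = 0, cod = n,
     coef = (\<lambda>J I. if I = {} \<and> J \<subseteq> {..<n} then Pf_sub M J else 0)\<rparr>"

definition sPfv :: "nat \<Rightarrow> (nat \<Rightarrow> nat \<Rightarrow> complex) \<Rightarrow> mor" where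
  "sPfv n M = \<lparr>dom = n, cod = 0,
     coef = (\<lambda>J I. if J = {} \<and> I \<subseteq> {..<n} then Pf_sub M ({..<n} - I) else 0)\<rparr>"

definition sPf_bra :: "nat \<Rightarrow> (nat \<Rightarrow> nat \<Rightarrow> complex) \<Rightarrow> mor" where
  "sPf_bra n M = \<lparr>dom = n, cod = 0,
     coef = (\<lambda>J I. if J = {} \<and> I \<subseteq> {..<n} then Pf_sub M I else 0)\<rparr>"

definition sPfv_ket :: "nat \<Rightarrow> (nat \<Rightarrow> nat \<Rightarrow> complex) \<Rightarrow> mor" where
  "sPfv_ket n M = \<lparr>dom = 0, cod = n,
     coef = (\<lambda>J I. if I = {} \<and> J \<subseteq> {..<n} then Pf_sub M ({..<n} - J) else 0)\<rparr>"

definition idm :: "nat \<Rightarrow> mor" where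
  "idm n = \<lparr>dom = n, cod = n, coef = (\<lambda>J I. if I = J \<and> J \<subseteq> {..<n} then 1 else 0)\<rparr>"

definition comp :: "mor \<Rightarrow> mor \<Rightarrow> mor" where
  "comp g f = \<lparr>dom = dom f, cod = cod g,
     coef = (\<lambda>K I. if K \<subseteq> {..<cod g} \<and> I \<subseteq> {..<dom f}
                    then (\<Sum>J\<in>Pow {..<cod f}. coef g K J * coef f J I) else 0)\<rparr>"

text \<open>Tensor product f (x) g : V_(n+n') -> V_(m+m'); the factors of f come first.\<close>
definition tens :: "mor \<Rightarrow> mor \<Rightarrow> mor" where
  "tens f g = \<lparr>dom = dom f + dom g, cod = cod f + cod g,
     coef = (\<lambda>J I. coef f (J \<inter> {..<cod f}) (I \<inter> {..<dom f}) *
                   coef g ((\<lambda>x. x - cod f) ` (J - {..<cod f})) ((\<lambda>x. x - dom f) ` (I - {..<dom f})))\<rparr>"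

definition dagger :: "mor \<Rightarrow> mor" where
  "dagger f = \<lparr>dom = cod f, cod = dom f, coef = (\<lambda>I J. cnj (coef f J I))\<rparr>"

inductive_set Pmor :: "mor set" where
  gen_sPf: "skew n M \<Longrightarrow> sPf n M \<in> Pmor"
| gen_sPfv: "skew n M \<Longrightarrow> sPfv n M \<in> Pmor"
| gen_id: "idm n \<in> Pmor"
| gen_comp: "f \<in> Pmor \<Longrightarrow> g \<in> Pmor \<Longrightarrow> cod f = dom g \<Longrightarrow> comp g f \<in> Pmor"
| gen_tens: "f \<in> Pmor \<Longrightarrow> g \<in> Pmor \<Longrightarrow> tens f g \<in> Pmor"

end

theory Submission
  imports Defs
begin


lemma pf_zero_row:
  "z \<in> set xs \<Longrightarrow> (\<forall>w\<in>set xs. A z w = 0 \<and> A w z = 0) \<Longrightarrow> pf A xs = 0"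
proof (induction A xs rule: pf.induct)
  case (1 A) then show ?case by simp
next
  case (2 A x xs)
  show ?case
  proof (cases "z = x")
    case True
    then show ?thesis using 2(3) by (simp add: nth_mem)
  next
    case False
    have "(-1) ^ j * A x (xs ! j) * pf A (take j xs @ drop (Suc j) xs) = 0" if j: "j < length xs" for j
    proof (cases "xs ! j = z")
      case True
      then show ?thesis using 2(3) by simp
    next
      case F: False
      have "z \<in> set (take j xs @ drop (Suc j) xs)"
      proof -
        from False 2(2) have "z \<in> set xs" by simp
        then obtain k where k: "k < length xs" "xs ! k = z" by (metis in_set_conv_nth)
        with F have "k \<noteq> j" by auto
        show ?thesis
        proof (cases "k < j")
          case True
          then show ?thesis using k j by (metis UnI1 in_set_conv_nth length_take min.absorb2 nth_take set_append less_imp_le_nat)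
        next
          case False
          then have "k > j" using \<open>k \<noteq> j\<close> by simp
          then have "drop (Suc j) xs ! (k - Suc j) = z" using k by simp
          moreover have "k - Suc j < length (drop (Suc j) xs)" using k \<open>k > j\<close> by simp
          ultimately show ?thesis by (metis UnI2 nth_mem set_append)
        qed
      qed
      moreover have "\<forall>w\<in>set (take j xs @ drop (Suc j) xs). A z w = 0 \<and> A w z = 0"
        using 2(3) by (auto dest: in_set_takeD in_set_dropD)
      ultimately have "pf A (take j xs @ drop (Suc j) xs) = 0" using 2(1) j by simp
      then show ?thesis by simp
    qed
    then show ?thesis by simp
  qed
qed

lemma pf_odd: "odd (length xs) \<Longrightarrow> pf A xs = 0"
proof (induction A xs rule: pf.induct)
  case (1 A) then show ?case by simp
next
  case (2 A x xs)
  have "pf A (take j xs @ drop (Suc j) xs) = 0" if "j < length xs" for j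
  proof -
    have o: "odd (length (take j xs @ drop (Suc j) xs))" using that 2(2) by auto
    have ne: "xs \<noteq> []" using that by auto
    show ?thesis using 2(1)[of j] that o by simp
  qed
  then show ?case by simp
qed


definition pairA :: "nat \<Rightarrow> nat \<Rightarrow> nat \<Rightarrow> complex" where
  "pairA n i j = (if i < n \<and> j = i + n then \<i> else if j < n \<and> i = j + n then -\<i> else 0)"

definition PP :: "nat \<Rightarrow> complex" where
  "PP k = (if even k then 1 else \<i>)"

lemma skew_pairA: "skew m (pairA n)"
  unfolding skew_def pairA_def by auto

lemma pairA_zero: "x < n \<Longrightarrow> y \<noteq> x + n \<Longrightarrow> pairA n x y = 0"
  unfolding pairA_def by auto

lemma pf_pair:
  "distinct xs \<Longrightarrow> set xs \<subseteq> {..<n} \<Longrightarrow> pf (pairA n) (xs @ map (\<lambda>x. x + n) xs) = PP (length xs)"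
proof (induction xs)
  case Nil then show ?case by (simp add: PP_def)
next
  case (Cons x xs)
  define ys where "ys = xs @ (x + n) # map (\<lambda>x. x + n) xs"
  have xn: "x < n" using Cons.prems by auto
  have dys: "distinct ys" using Cons.prems unfolding ys_def
    by (auto simp: distinct_map inj_on_def)
  have lys: "length ys = Suc (2 * length xs)" unfolding ys_def by simp
  have pos: "ys ! length xs = x + n" unfolding ys_def by (simp add: nth_append)
  have tm: "(-1) ^ j * pairA n x (ys ! j) * pf (pairA n) (take j ys @ drop (Suc j) ys)
      = (if j = length xs then (-1) ^ length xs * \<i> * PP (length xs) else 0)"
    if j: "j \<in> {..<length ys}" for j
  proof (cases "j = length xs")
    case True
    have "take j ys @ drop (Suc j) ys = xs @ map (\<lambda>x. x + n) xs"
      using True unfolding ys_def by simp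
    moreover have "pairA n x (ys ! j) = \<i>" using True pos xn by (simp add: pairA_def)
    ultimately show ?thesis using True Cons by simp
  next
    case False
    have "ys ! j \<noteq> x + n"
    proof
      assume "ys ! j = x + n"
      then have "ys ! j = ys ! length xs" using pos by simp
      then show False using nth_eq_iff_index_eq[OF dys] j lys False by auto
    qed
    then show ?thesis using pairA_zero[OF xn] False by simp
  qed
  have "pf (pairA n) ((x # xs) @ map (\<lambda>x. x + n) (x # xs)) = pf (pairA n) (x # ys)"
    unfolding ys_def by simp
  also have "\<dots> = (\<Sum>j<length ys. (if j = length xs then (-1) ^ length xs * \<i> * PP (length xs) else 0))"
    by (simp only: pf.simps) (rule sum.cong, auto simp only: tm)
  also have "\<dots> = (-1) ^ length xs * \<i> * PP (length xs)"
    using lys by simp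
  also have "\<dots> = PP (length (x # xs))"
    by (auto simp: PP_def)
  finally show ?case .
qed


lemma core:
  assumes I: "I \<subseteq> {..<n}" and L: "L \<subseteq> {..<n}"
  shows "Pf_sub (pairA n) (L \<union> (\<lambda>x. x + n) ` I) = (if L = I then PP (card I) else 0)"
proof (cases "L = I")
  case True
  define xs where "xs = sorted_list_of_set I"
  have fI: "finite I" using I finite_subset by blast
  have sl: "sorted_list_of_set (I \<union> (\<lambda>x. x + n) ` I) = xs @ map (\<lambda>x. x + n) xs"
  proof (rule sorted_distinct_set_unique)
    show "sorted (sorted_list_of_set (I \<union> (\<lambda>x. x + n) ` I))" by simp
    show "distinct (sorted_list_of_set (I \<union> (\<lambda>x. x + n) ` I))" by simp
    have s1: "sorted xs" unfolding xs_def by simp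
    have sx: "set xs = I" unfolding xs_def using fI by simp
    show "sorted (xs @ map (\<lambda>x. x + n) xs)"
      using s1 sx I by (auto simp: sorted_append sorted_map intro: monoI)
    show "distinct (xs @ map (\<lambda>x. x + n) xs)"
      using sx I unfolding xs_def by (auto simp: distinct_map inj_on_def)
    show "set (sorted_list_of_set (I \<union> (\<lambda>x. x + n) ` I)) = set (xs @ map (\<lambda>x. x + n) xs)"
      using fI sx by simp
  qed
  have "pf (pairA n) (xs @ map (\<lambda>x. x + n) xs) = PP (length xs)"
    by (rule pf_pair) (use I fI in \<open>auto simp: xs_def\<close>)
  then show ?thesis using True sl fI by (simp add: Pf_sub_def xs_def)
next
  case False
  have fS: "finite (L \<union> (\<lambda>x. x + n) ` I)" using I L finite_subset by blast
  obtain z where z: "z \<in> L \<union> (\<lambda>x. x + n) ` I"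
    and row: "\<forall>w \<in> L \<union> (\<lambda>x. x + n) ` I. pairA n z w = 0 \<and> pairA n w z = 0"
  proof (cases "\<exists>x. x \<in> L \<and> x \<notin> I")
    case True
    then obtain x where x: "x \<in> L" "x \<notin> I" by blast
    show ?thesis
    proof (rule that[of x])
      show "x \<in> L \<union> (\<lambda>x. x + n) ` I" using x by simp
      show "\<forall>w \<in> L \<union> (\<lambda>x. x + n) ` I. pairA n x w = 0 \<and> pairA n w x = 0"
        using x I L by (auto simp: pairA_def)
    qed
  next
    case F: False
    then obtain x where x: "x \<in> I" "x \<notin> L" using False by blast
    show ?thesis
    proof (rule that[of "x + n"])
      show "x + n \<in> L \<union> (\<lambda>x. x + n) ` I" using x by simp
      show "\<forall>w \<in> L \<union> (\<lambda>x. x + n) ` I. pairA n (x + n) w = 0 \<and> pairA n w (x + n) = 0"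
        using x I L by (auto simp: pairA_def)
    qed
  qed
  have "pf (pairA n) (sorted_list_of_set (L \<union> (\<lambda>x. x + n) ` I)) = 0"
    by (rule pf_zero_row[of z]) (use z row fS in auto)
  then show ?thesis using False by (simp add: Pf_sub_def)
qed


lemma img_shift1: "(\<lambda>x::nat. x - n) ` (K - {..<n}) = J \<Longrightarrow> K - {..<n} = (\<lambda>x. x + n) ` J"
proof -
  assume h: "(\<lambda>x. x - n) ` (K - {..<n}) = J"
  show ?thesis
  proof
    show "K - {..<n} \<subseteq> (\<lambda>x. x + n) ` J"
    proof
      fix x assume x: "x \<in> K - {..<n}"
      then have "x - n \<in> J" using h by blast
      moreover have "x = (x - n) + n" using x by auto
      ultimately show "x \<in> (\<lambda>x. x + n) ` J" by blast
    qed
    show "(\<lambda>x. x + n) ` J \<subseteq> K - {..<n}"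
    proof
      fix y assume "y \<in> (\<lambda>x. x + n) ` J"
      then obtain j where j: "j \<in> J" "y = j + n" by blast
      then obtain x where x: "x \<in> K - {..<n}" "j = x - n" using h by blast
      then have "x = y" using j by simp
      then show "y \<in> K - {..<n}" using x by simp
    qed
  qed
qed

lemma img_shift2: "L \<subseteq> {..<(n::nat)} \<Longrightarrow> (\<lambda>x. x - n) ` ((L \<union> (\<lambda>x. x + n) ` J) - {..<n}) = J"
proof -
  assume L: "L \<subseteq> {..<n}"
  have "(L \<union> (\<lambda>x. x + n) ` J) - {..<n} = (\<lambda>x. x + n) ` J" using L by (auto; linarith)
  then show ?thesis by (simp add: image_image)
qed

lemma split_K: "K = (K \<inter> {..<(n::nat)}) \<union> (K - {..<n})" by auto

lemma ket_term:
  assumes K: "K \<subseteq> {..<2*n}" and J: "J \<subseteq> {..<n}"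
  shows "coef (tens (sPfv n M) (idm n)) J K * coef (sPf (2*n) (pairA n)) K {}
       = (if K = J \<union> (\<lambda>x. x + n) ` J then Pf_sub M ({..<n} - J) * PP (card J) else 0)"
proof (cases "(\<lambda>x. x - n) ` (K - {..<n}) = J")
  case True
  have KK: "K = (K \<inter> {..<n}) \<union> (\<lambda>x. x + n) ` J"
    using img_shift1[OF True] split_K[of K n] by simp
  have pf: "Pf_sub (pairA n) K = (if K \<inter> {..<n} = J then PP (card J) else 0)"
    using core[OF J, of "K \<inter> {..<n}"] KK by simp
  have "coef (tens (sPfv n M) (idm n)) J K = Pf_sub M ({..<n} - K \<inter> {..<n})"
    using True J by (simp add: tens_def sPfv_def idm_def)
  moreover have "coef (sPf (2*n) (pairA n)) K {} = Pf_sub (pairA n) K"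
    using K by (simp add: sPf_def)
  moreover have "(K = J \<union> (\<lambda>x. x + n) ` J) = (K \<inter> {..<n} = J)"
    using KK J by auto
  ultimately show ?thesis using pf by (auto simp: Diff_Int2)
next
  case False
  have "coef (tens (sPfv n M) (idm n)) J K = 0"
    using False by (simp add: tens_def sPfv_def idm_def)
  moreover have "K \<noteq> J \<union> (\<lambda>x. x + n) ` J"
    using False img_shift2[OF J, of J] by auto
  ultimately show ?thesis by simp
qed


lemma compl_shift:
  assumes L: "L \<subseteq> {..<(n::nat)}" and I: "I \<subseteq> {..<n}"
  shows "{..<2*n} - (L \<union> (\<lambda>x. x + n) ` I) = ({..<n} - L) \<union> (\<lambda>x. x + n) ` ({..<n} - I)"
proof (rule set_eqI)
  fix x
  show "x \<in> {..<2*n} - (L \<union> (\<lambda>x. x + n) ` I) \<longleftrightarrow> x \<in> ({..<n} - L) \<union> (\<lambda>x. x + n) ` ({..<n} - I)"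
  proof (cases "x < n")
    case True
    then show ?thesis using L by auto
  next
    case False
    then have x: "x = (x - n) + n" by simp
    have "x \<in> (\<lambda>x. x + n) ` I \<longleftrightarrow> x - n \<in> I" using False by (auto simp: image_iff) (metis x)
    moreover have "x \<in> (\<lambda>x. x + n) ` ({..<n} - I) \<longleftrightarrow> x - n \<in> {..<n} - I" using False by (auto simp: image_iff) (metis x Diff_iff lessThan_iff)
    ultimately show ?thesis using False L by auto
  qed
qed

lemma bra_term:
  assumes K: "K \<subseteq> {..<2*n}" and I: "I \<subseteq> {..<n}"
  shows "coef (sPfv (2*n) (pairA n)) {} K * coef (tens (sPf n M) (idm n)) K I
       = (if K = I \<union> (\<lambda>x. x + n) ` I then Pf_sub M I * PP (n - card I) else 0)"
proof (cases "(\<lambda>x. x - n) ` (K - {..<n}) = I")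
  case True
  have KK: "K = (K \<inter> {..<n}) \<union> (\<lambda>x. x + n) ` I"
    using img_shift1[OF True] split_K[of K n] by simp
  have cK: "{..<2*n} - K = ({..<n} - K \<inter> {..<n}) \<union> (\<lambda>x. x + n) ` ({..<n} - I)"
    using compl_shift[of "K \<inter> {..<n}" n I] I KK by simp
  have ci: "card ({..<n} - I) = n - card I" using I by (simp add: card_Diff_subset finite_subset)
  have pf: "Pf_sub (pairA n) ({..<2*n} - K) = (if K \<inter> {..<n} = I then PP (n - card I) else 0)"
  proof -
    have "Pf_sub (pairA n) ({..<2*n} - K) = (if {..<n} - K \<inter> {..<n} = {..<n} - I then PP (card ({..<n} - I)) else 0)"
      unfolding cK by (rule core) auto
    moreover have "({..<n} - K \<inter> {..<n} = {..<n} - I) = (K \<inter> {..<n} = I)" using I by auto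
    ultimately show ?thesis using ci by simp
  qed
  have "coef (tens (sPf n M) (idm n)) K I = Pf_sub M (K \<inter> {..<n})"
    using True I by (simp add: tens_def sPf_def idm_def)
  moreover have "coef (sPfv (2*n) (pairA n)) {} K = Pf_sub (pairA n) ({..<2*n} - K)"
    using K by (simp add: sPfv_def)
  moreover have "(K = I \<union> (\<lambda>x. x + n) ` I) = (K \<inter> {..<n} = I)"
    using KK I by auto
  ultimately show ?thesis using pf by auto
next
  case False
  have "coef (tens (sPf n M) (idm n)) K I = 0"
    using False by (simp add: tens_def sPf_def idm_def)
  moreover have "K \<noteq> I \<union> (\<lambda>x. x + n) ` I"
    using False img_shift2[OF I, of I] by auto
  ultimately show ?thesis by simp
qed


lemma Pf_sub_odd: "finite S \<Longrightarrow> odd (card S) \<Longrightarrow> Pf_sub M S = 0"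
  unfolding Pf_sub_def by (rule pf_odd) simp

lemma ket_sum:
  assumes J: "J \<subseteq> {..<n}"
  shows "coef (comp (tens (sPfv n M) (idm n)) (sPf (2*n) (pairA n))) J {} = PP n * Pf_sub M ({..<n} - J)"
proof -
  have "coef (comp (tens (sPfv n M) (idm n)) (sPf (2*n) (pairA n))) J {}
     = (\<Sum>K\<in>Pow {..<2*n}. coef (tens (sPfv n M) (idm n)) J K * coef (sPf (2*n) (pairA n)) K {})"
    using J by (simp add: comp_def tens_def sPf_def sPfv_def idm_def)
  also have "\<dots> = (\<Sum>K\<in>Pow {..<2*n}. (if K = J \<union> (\<lambda>x. x + n) ` J then Pf_sub M ({..<n} - J) * PP (card J) else 0))"
    by (rule sum.cong) (use ket_term J in auto)
  also have "\<dots> = Pf_sub M ({..<n} - J) * PP (card J)"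
    using J by (subst sum.delta) auto 
  also have "\<dots> = PP n * Pf_sub M ({..<n} - J)"
  proof (cases "odd (card ({..<n} - J))")
    case True
    then show ?thesis by (simp add: Pf_sub_odd)
  next
    case False
    have cJ: "card ({..<n} - J) = n - card J" "card J \<le> n"
      using J by (simp_all add: card_Diff_subset finite_subset card_mono[of "{..<n}", simplified])
    then have "even (n - card J)" using False by simp
    then have "even n = even (card J)" using cJ(2) by auto
    then have "PP (card J) = PP n" by (simp add: PP_def)
    then show ?thesis by simp
  qed
  finally show ?thesis .
qed

lemma bra_sum:
  assumes I: "I \<subseteq> {..<n}"
  shows "coef (comp (sPfv (2*n) (pairA n)) (tens (sPf n M) (idm n))) {} I = PP n * Pf_sub M I"
proof -
  have "coef (comp (sPfv (2*n) (pairA n)) (tens (sPf n M) (idm n))) {} I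
     = (\<Sum>K\<in>Pow {..<2*n}. coef (sPfv (2*n) (pairA n)) {} K * coef (tens (sPf n M) (idm n)) K I)"
    using I by (simp add: comp_def tens_def sPf_def sPfv_def idm_def mult_2)
  also have "\<dots> = (\<Sum>K\<in>Pow {..<2*n}. (if K = I \<union> (\<lambda>x. x + n) ` I then Pf_sub M I * PP (n - card I) else 0))"
    by (rule sum.cong) (use bra_term I in auto)
  also have "\<dots> = Pf_sub M I * PP (n - card I)"
    using I by (subst sum.delta) auto 
  also have "\<dots> = PP n * Pf_sub M I"
  proof (cases "odd (card I)")
    case True
    then show ?thesis using I by (simp add: Pf_sub_odd finite_subset)
  next
    case False
    have "card I \<le> n"
      using I by (simp add: card_mono[of "{..<n}", simplified])
    then have "even n = even (n - card I)" using False by auto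
    then have "PP (n - card I) = PP n" by (simp add: PP_def)
    then show ?thesis by simp
  qed
  finally show ?thesis .
qed


definition scm :: "complex \<Rightarrow> nat \<Rightarrow> nat \<Rightarrow> complex" where
  "scm z i j = (if i = 0 \<and> j = 1 then z else if i = 1 \<and> j = 0 then -z else 0)"

definition sc :: "complex \<Rightarrow> mor" where
  "sc z = comp (sPfv 2 (scm z)) (sPf 2 (\<lambda>_ _. 0))"

lemma sc_Pmor: "sc z \<in> Pmor"
  unfolding sc_def
proof (rule gen_comp)
  show "sPf 2 (\<lambda>_ _. 0) \<in> Pmor" by (rule gen_sPf) (simp add: skew_def)
  show "sPfv 2 (scm z) \<in> Pmor" by (rule gen_sPfv) (auto simp add: skew_def scm_def)
qed (simp add: sPf_def sPfv_def)

lemma pf_zero_mat: "pf (\<lambda>_ _. 0) xs = (if xs = [] then 1 else 0)"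
  by (cases xs) simp_all

lemma sc_dom: "dom (sc z) = 0" and sc_cod: "cod (sc z) = 0"
  by (simp_all add: sc_def comp_def sPf_def sPfv_def)

lemma sc_coef: "coef (sc z) J I = (if J = {} \<and> I = {} then z else 0)"
proof -
  have "(\<Sum>K\<in>Pow {..<2::nat}. (if K \<subseteq> {..<2} then Pf_sub (scm z) ({..<2} - K) else 0) *
           (if K \<subseteq> {..<2} then Pf_sub (\<lambda>_ _. 0) K else 0))
     = (\<Sum>K\<in>Pow {..<2::nat}. (if K = {} then z else 0))"
  proof (rule sum.cong)
    fix K assume K: "K \<in> Pow {..<2::nat}"
    then have fK: "finite K" by (meson PowD finite_lessThan finite_subset)
    have "Pf_sub (\<lambda>_ _. 0) K = (if K = {} then 1 else 0)"
      using fK by (simp add: Pf_sub_def pf_zero_mat)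
    moreover have "Pf_sub (scm z) {..<2} = z"
      by (simp add: Pf_sub_def scm_def numeral_2_eq_2)
    ultimately show "(if K \<subseteq> {..<2} then Pf_sub (scm z) ({..<2} - K) else 0) *
           (if K \<subseteq> {..<2} then Pf_sub (\<lambda>_ _. 0) K else 0) = (if K = {} then z else 0)"
      using K by auto
  qed simp
  also have "\<dots> = z" by (subst sum.delta) auto
  finally have s: "(\<Sum>K\<in>Pow {..<2::nat}. (if K \<subseteq> {..<2} then Pf_sub (scm z) ({..<2} - K) else 0) *
           (if K \<subseteq> {..<2} then Pf_sub (\<lambda>_ _. 0) K else 0)) = z" .
  show ?thesis using s by (simp add: sc_def comp_def sPf_def sPfv_def)
qed

lemma tens_sc: "tens (sc z) f = \<lparr>dom = dom f, cod = cod f, coef = (\<lambda>J I. z * coef f J I)\<rparr>"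
  by (simp add: tens_def sc_coef sc_dom sc_cod)

definition PPinv :: "nat \<Rightarrow> complex" where
  "PPinv n = (if even n then 1 else -\<i>)"

lemma PPinv: "PPinv n * PP n = 1"
  by (simp add: PPinv_def PP_def)

lemma ket_Pmor:
  assumes M: "skew n M"
  shows "sPfv_ket n M \<in> Pmor"
proof -
  define T where "T = comp (tens (sPfv n M) (idm n)) (sPf (2*n) (pairA n))"
  have T: "T \<in> Pmor" unfolding T_def
  proof (rule gen_comp)
    show "sPf (2*n) (pairA n) \<in> Pmor" by (rule gen_sPf[OF skew_pairA])
    show "tens (sPfv n M) (idm n) \<in> Pmor" by (rule gen_tens[OF gen_sPfv[OF M] gen_id])
  qed (simp add: tens_def sPf_def sPfv_def idm_def)
  have "tens (sc (PPinv n)) T \<in> Pmor" by (rule gen_tens[OF sc_Pmor T])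
  moreover have "tens (sc (PPinv n)) T = sPfv_ket n M"
  proof -
    have d: "dom T = 0" "cod T = n" by (simp_all add: T_def comp_def tens_def sPf_def sPfv_def idm_def)
    have c: "PPinv n * coef T J I = coef (sPfv_ket n M) J I" for J I
    proof (cases "I = {} \<and> J \<subseteq> {..<n}")
      case True
      then show ?thesis using ket_sum[of J n M] PPinv[of n]
        by (simp add: T_def sPfv_ket_def)
    next
      case False
      then show ?thesis by (auto simp: T_def sPfv_ket_def comp_def tens_def sPf_def sPfv_def idm_def)
    qed
    show ?thesis unfolding tens_sc using d c by (simp add: sPfv_ket_def)
  qed
  ultimately show ?thesis by simp
qed

lemma bra_Pmor:
  assumes M: "skew n M"
  shows "sPf_bra n M \<in> Pmor"
proof -
  define T where "T = comp (sPfv (2*n) (pairA n)) (tens (sPf n M) (idm n))"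
  have T: "T \<in> Pmor" unfolding T_def
  proof (rule gen_comp)
    show "sPfv (2*n) (pairA n) \<in> Pmor" by (rule gen_sPfv[OF skew_pairA])
    show "tens (sPf n M) (idm n) \<in> Pmor" by (rule gen_tens[OF gen_sPf[OF M] gen_id])
  qed (simp add: tens_def sPf_def sPfv_def idm_def mult_2)
  have "tens (sc (PPinv n)) T \<in> Pmor" by (rule gen_tens[OF sc_Pmor T])
  moreover have "tens (sc (PPinv n)) T = sPf_bra n M"
  proof -
    have d: "dom T = n" "cod T = 0" by (simp_all add: T_def comp_def tens_def sPf_def sPfv_def idm_def)
    have c: "PPinv n * coef T J I = coef (sPf_bra n M) J I" for J I
    proof (cases "J = {} \<and> I \<subseteq> {..<n}")
      case True
      then show ?thesis using bra_sum[of I n M] PPinv[of n]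
        by (simp add: T_def sPf_bra_def)
    next
      case False
      then show ?thesis by (auto simp: T_def sPf_bra_def comp_def tens_def sPf_def sPfv_def idm_def)
    qed
    show ?thesis unfolding tens_sc using d c by (simp add: sPf_bra_def)
  qed
  ultimately show ?thesis by simp
qed




lemma pf_cnj: "cnj (pf A xs) = pf (\<lambda>i j. cnj (A i j)) xs"
proof (induction A xs rule: pf.induct)
  case (1 A) then show ?case by simp
next
  case (2 A x xs)
  show ?case by (simp add: cnj_sum 2)
qed

lemma Pf_sub_cnj: "Pf_sub (\<lambda>i j. cnj (M i j)) S = cnj (Pf_sub M S)"
  by (simp add: Pf_sub_def pf_cnj)

lemma skew_cnj: "skew n M \<Longrightarrow> skew n (\<lambda>i j. cnj (M i j))"
  unfolding skew_def by (metis complex_cnj_minus)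

lemma dagger_sPf: "dagger (sPf n M) = sPf_bra n (\<lambda>i j. cnj (M i j))"
  by (simp add: dagger_def sPf_def sPf_bra_def Pf_sub_cnj fun_eq_iff)

lemma dagger_sPfv: "dagger (sPfv n M) = sPfv_ket n (\<lambda>i j. cnj (M i j))"
  by (simp add: dagger_def sPfv_def sPfv_ket_def Pf_sub_cnj fun_eq_iff)

lemma dagger_idm: "dagger (idm n) = idm n"
  by (auto simp: dagger_def idm_def intro!: ext)

lemma dagger_comp: "cod f = dom g \<Longrightarrow> dagger (comp g f) = comp (dagger f) (dagger g)"
  by (simp add: dagger_def comp_def cnj_sum mult.commute fun_eq_iff)

lemma dagger_tens: "dagger (tens f g) = tens (dagger f) (dagger g)"
  by (simp add: dagger_def tens_def)

theorem mainTheorem11: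
  shows "(\<forall>n M. skew n M \<longrightarrow> sPf_bra n M \<in> Pmor \<and> sPfv_ket n M \<in> Pmor)
         \<and> (\<forall>f \<in> Pmor. dagger f \<in> Pmor)"
proof (intro conjI allI impI ballI)
  fix n M assume "skew n M"
  then show "sPf_bra n M \<in> Pmor" "sPfv_ket n M \<in> Pmor" by (simp_all add: bra_Pmor ket_Pmor)
next
  fix f assume "f \<in> Pmor"
  then show "dagger f \<in> Pmor"
  proof (induction rule: Pmor.induct)
    case (gen_sPf n M)
    then show ?case by (simp add: dagger_sPf bra_Pmor skew_cnj)
  next
    case (gen_sPfv n M)
    then show ?case by (simp add: dagger_sPfv ket_Pmor skew_cnj)
  next
    case (gen_id n)
    then show ?case by (simp add: dagger_idm Pmor.gen_id)
  next
    case (gen_comp f g)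
    then have "dagger (comp g f) = comp (dagger f) (dagger g)" by (simp add: dagger_comp)
    moreover have "cod (dagger g) = dom (dagger f)" using gen_comp by (simp add: dagger_def)
    ultimately show ?case using Pmor.gen_comp[of "dagger g" "dagger f"] gen_comp by simp
  next
    case (gen_tens f g)
    then show ?case by (simp add: dagger_tens Pmor.gen_tens)
  qed
qed

end
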